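(* Let $a>0$, $p>1$, and let $\phi\in C^1((0,a])\cap C^0([0,a])$ satisfy $\phi(0)=0$, $\phi(t)>0$ for $t\in(0,a]$, and $c_1t^{p-1+\delta}\le\phi(t)\le c_2t^{p-1+\delta}$ for all $t\in(0,a]$, for some constants $c_1,c_2,\delta>0$. Let $\eta_a(t)=\phi(t)^{-\frac1{p-1}}\big/\int_t^a\phi(\sigma)^{-\frac1{p-1}}\,d\sigma$ for $t\in(0,a)$. Then for every $u\in\mathcal E$, \[ \int_0^a|u'|^p\phi\,dt\;\ge\;\left(\frac{p-1}{p}\right)^p\int_0^a|u|^p\eta_a^p\phi\,dt, \] and the constant $\left(\frac{p-1}{p}\right)^p$ is sharp (it cannot be replaced by a larger constant).
   Context: $W^{1,p}(0,a;\phi)=\{u:[0,a]\to\mathbb R:\ u\in L^1_{\mathrm{loc}}[0,a],\ \int_0^a|u'|^p\phi\,dt<\infty\}$, with $u'$ the distributional derivative (such $u$ are absolutely continuous on $[\epsilon,a]$ for each $\epsilon\in(0,a)$), and $\mathcal E=\{u\in W^{1,p}(0,a;\phi): u(a)=0\}$. *)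

theory Defs
  imports "HOL-Analysis.Analysis"
begin

text \<open>Membership of u in W^{1,p}(0,a;phi), with g a (representative of the)
distributional derivative u'.  Since u is absolutely continuous on every [eps,a],
eps in (0,a], u' is locally integrable on (0,a] and u y - u x = int_x^y u'.\<close>
definition W1p_with_deriv ::
  "real \<Rightarrow> real \<Rightarrow> (real \<Rightarrow> real) \<Rightarrow> (real \<Rightarrow> real) \<Rightarrow> (real \<Rightarrow> real) \<Rightarrow> bool" where
  "W1p_with_deriv a p \<phi> u g \<longleftrightarrow>
     set_integrable lborel {0..a} u \<and>
     (\<forall>\<epsilon>\<in>{0<..a}. set_integrable lborel {\<epsilon>..a} g) \<and>
     (\<forall>x y. 0 < x \<and> x \<le> y \<and> y \<le> a \<longrightarrow> u y - u x = (LINT s:{x..y}|lborel. g s)) \<and>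
     set_integrable lborel {0..a} (\<lambda>t. \<bar>g t\<bar> powr p * \<phi> t)"

definition energy_space_with_deriv ::
  "real \<Rightarrow> real \<Rightarrow> (real \<Rightarrow> real) \<Rightarrow> (real \<Rightarrow> real) \<Rightarrow> (real \<Rightarrow> real) \<Rightarrow> bool" where
  "energy_space_with_deriv a p \<phi> u g \<longleftrightarrow> W1p_with_deriv a p \<phi> u g \<and> u a = 0"

definition eta :: "real \<Rightarrow> real \<Rightarrow> (real \<Rightarrow> real) \<Rightarrow> real \<Rightarrow> real" where
  "eta a p \<phi> t = \<phi> t powr (-1 / (p - 1)) / (LINT \<sigma>:{t..a}|lborel. \<phi> \<sigma> powr (-1 / (p - 1)))"

end

theory Submission
  imports Defs
begin

lemma holder_nn:
  fixes f h :: "real \<Rightarrow> real" and p q A B :: real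
  assumes p: "p > 1" and q: "q = p/(p-1)"
    and fm: "f \<in> borel_measurable lborel" and hm: "h \<in> borel_measurable lborel"
    and f0: "\<And>x. 0 \<le> f x" and h0: "\<And>x. 0 \<le> h x"
    and B: "(\<integral>\<^sup>+x. ennreal (h x powr q) \<partial>lborel) \<le> ennreal B" and Bpos: "B > 0"
    and A: "(\<integral>\<^sup>+x. ennreal (f x powr p) \<partial>lborel) = ennreal A" and A0: "A \<ge> 0"
  shows "(\<integral>\<^sup>+x. ennreal (f x * h x) \<partial>lborel) \<le> ennreal (A powr (1/p) * B powr (1/q))"
proof (cases "A = 0")
  case True
  have "AE x in lborel. ennreal (f x powr p) = 0"
    using A True fm by (subst nn_integral_0_iff_AE[symmetric]) auto
  then have "AE x in lborel. ennreal (f x * h x) = 0"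
    by eventually_elim (use f0 in auto)
  then have "(\<integral>\<^sup>+x. ennreal (f x * h x) \<partial>lborel) = 0"
    using fm hm by (subst nn_integral_0_iff_AE) auto
  then show ?thesis by simp
next
  case False
  then have Apos: "A > 0" using A0 by simp
  have q1: "q > 1" unfolding q using p by (simp add: field_simps)
  have pq: "1/p + 1/q = 1" unfolding q using p by (simp add: field_simps)
  define l where "l = (B/A) powr (1/(p*q))"
  have lpos: "l > 0" unfolding l_def using Apos Bpos by simp
  have lp: "l powr p = (B/A) powr (1/q)" unfolding l_def using p q1 by (simp add: powr_powr)
  have lq: "l powr q = (B/A) powr (1/p)" unfolding l_def using p q1 by (simp add: powr_powr)
  define c1 where "c1 = l powr p / p"
  define c2 where "c2 = 1 / (q * l powr q)"
  have c1: "c1 \<ge> 0" and c2: "c2 \<ge> 0" unfolding c1_def c2_def using p q1 by auto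
  have pt: "ennreal (f x * h x) \<le> ennreal c1 * ennreal (f x powr p) + ennreal c2 * ennreal (h x powr q)" for x
  proof -
    have "f x * h x = (l * f x) * (h x / l)" using lpos by simp
    also have "\<dots> \<le> (l * f x) powr p / p + (h x / l) powr q / q"
      by (rule Youngs_inequality[OF p q1 pq]) (use lpos f0 h0 in auto)
    also have "\<dots> = c1 * f x powr p + c2 * h x powr q"
      unfolding c1_def c2_def using lpos f0[of x] h0[of x]
      by (simp add: powr_mult powr_divide)
    finally have r: "f x * h x \<le> c1 * f x powr p + c2 * h x powr q" .
    have "ennreal (f x * h x) \<le> ennreal (c1 * f x powr p + c2 * h x powr q)" by (rule ennreal_leI[OF r])
    also have "\<dots> = ennreal c1 * ennreal (f x powr p) + ennreal c2 * ennreal (h x powr q)"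
      using c1 c2 by (simp add: ennreal_plus ennreal_mult)
    finally show ?thesis .
  qed
  have "(\<integral>\<^sup>+x. ennreal (f x * h x) \<partial>lborel)
      \<le> (\<integral>\<^sup>+x. ennreal c1 * ennreal (f x powr p) + ennreal c2 * ennreal (h x powr q) \<partial>lborel)"
    by (intro nn_integral_mono pt)
  also have "\<dots> = ennreal c1 * (\<integral>\<^sup>+x. ennreal (f x powr p) \<partial>lborel) + ennreal c2 * (\<integral>\<^sup>+x. ennreal (h x powr q) \<partial>lborel)"
    using fm hm by (simp add: nn_integral_add nn_integral_cmult)
  also have "\<dots> \<le> ennreal c1 * ennreal A + ennreal c2 * ennreal B"
    unfolding A by (intro add_mono mult_left_mono B order_refl) auto
  also have "\<dots> = ennreal (c1 * A + c2 * B)"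
    using c1 c2 A0 Bpos by (simp add: ennreal_plus ennreal_mult)
  also have "c1 * A + c2 * B = A powr (1/p) * B powr (1/q)"
  proof -
    define a1 a2 b1 b2 where "a1 = A powr (1/p)" "a2 = A powr (1/q)" "b1 = B powr (1/p)" "b2 = B powr (1/q)"
    have AA: "A = a1 * a2" unfolding a1_a2_b1_b2_def using Apos pq by (simp add: powr_add[symmetric])
    have BB: "B = b1 * b2" unfolding a1_a2_b1_b2_def using Bpos pq by (simp add: powr_add[symmetric])
    have pos: "a1 > 0" "a2 > 0" "b1 > 0" "b2 > 0" unfolding a1_a2_b1_b2_def using Apos Bpos by auto
    have e1: "(B/A) powr (1/q) = b2/a2" and e2: "(B/A) powr (1/p) = b1/a1"
      unfolding a1_a2_b1_b2_def using Apos Bpos by (simp_all add: powr_divide)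
    have "c1 * A + c2 * B = (b2/a2) * (a1*a2) / p + (b1*b2) / (q * (b1/a1))"
      unfolding c1_def c2_def lp lq e1 e2 by (simp add: AA[symmetric] BB[symmetric])
    also have "\<dots> = a1 * b2 * (1/p + 1/q)" using pos p q1 by (simp add: field_simps)
    finally show ?thesis using pq unfolding a1_a2_b1_b2_def by simp
  qed
  finally show ?thesis .
qed



locale hardy =
  fixes a p :: real and \<phi> :: "real \<Rightarrow> real"
  assumes a_pos: "0 < a" and p_gt: "1 < p"
    and phi_cont: "continuous_on {0..a} \<phi>"
    and phi_pos: "\<And>t. t \<in> {0<..a} \<Longrightarrow> 0 < \<phi> t"
begin

definition w :: "real \<Rightarrow> real" where "w t = \<phi> t powr (-1 / (p - 1))"
definition W :: "real \<Rightarrow> real" where "W t = (LINT \<sigma>:{t..a}|lborel. w \<sigma>)"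

lemma eta_eq: "eta a p \<phi> t = w t / W t"
  unfolding eta_def w_def W_def ..

lemma w_pos: "t \<in> {0<..a} \<Longrightarrow> 0 < w t"
  using phi_pos[of t] unfolding w_def by auto

lemma w_cont: "continuous_on {0<..a} w"
proof -
  have "continuous_on {0<..a} \<phi>" using phi_cont by (rule continuous_on_subset) auto
  then show ?thesis unfolding w_def
    using phi_pos by (intro continuous_on_powr continuous_on_const) force+
qed

lemma w_cont': "c > 0 \<Longrightarrow> continuous_on {c..a} w"
  by (rule continuous_on_subset[OF w_cont]) auto

lemma w_isCont: "t \<in> {0<..<a} \<Longrightarrow> isCont w t"
proof -
  have "continuous_on {0<..<a} w" by (rule continuous_on_subset[OF w_cont]) auto
  then show "t \<in> {0<..<a} \<Longrightarrow> isCont w t" using continuous_on_eq_continuous_at[of "{0<..<a}" w] by simp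
qed

lemma W_int: "0 < c \<Longrightarrow> c \<le> t \<Longrightarrow> W t = integral {t..a} w \<and> w integrable_on {t..a}"
proof -
  assume "0 < c" "c \<le> t"
  then have "set_integrable lborel {t..a} w"
    by (intro borel_integrable_atLeastAtMost' continuous_on_subset[OF w_cont]) auto
  then show ?thesis unfolding W_def using set_borel_integral_eq_integral by blast
qed

lemma W_split: "0 < c \<Longrightarrow> c \<le> t \<Longrightarrow> t \<le> a \<Longrightarrow> W t = W c - integral {c..t} w"
proof -
  assume h: "0 < c" "c \<le> t" "t \<le> a"
  have "integral {c..t} w + integral {t..a} w = integral {c..a} w"
    using W_int[OF h(1) order_refl] h Henstock_Kurzweil_Integration.integral_combine[of c t a w] by auto
  then show ?thesis using W_int[OF h(1) order_refl] W_int[OF h(1,2)] by simp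
qed

lemma W_a: "W a = 0"
  using W_int[OF a_pos order_refl] by simp

lemma W_cont': "0 < c \<Longrightarrow> continuous_on {c..a} W"
proof -
  assume c: "0 < c"
  have "continuous_on {c..a} (\<lambda>x. integral {x..a} w)"
    using W_int[OF c order_refl] by (intro indefinite_integral_continuous_1') auto
  then show ?thesis
    by (rule continuous_on_eq) (use W_int[OF c] in auto)
qed


lemma W_deriv: "t \<in> {0<..<a} \<Longrightarrow> (W has_real_derivative - w t) (at t)"
proof -
  assume t: "t \<in> {0<..<a}"
  define c where "c = t / 2"
  have c: "0 < c" "c < t" using t by (auto simp: c_def)
  have "((\<lambda>u. integral {c..u} w) has_vector_derivative w t) (at t within {c..a})"
    using t c by (intro integral_has_vector_derivative w_cont') auto
  then have "((\<lambda>u. integral {c..u} w) has_vector_derivative w t) (at t)"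
    using t c by (subst (asm) at_within_interior) auto
  then have "((\<lambda>u. W c - integral {c..u} w) has_real_derivative - w t) (at t)"
    by (auto intro!: derivative_eq_intros simp: has_real_derivative_iff_has_vector_derivative)
  moreover have "t \<in> {c<..<a}" using t c by auto
  moreover have "W c - integral {c..x} w = W x" if "x \<in> {c<..<a}" for x
    using W_split[OF c(1), of x] that by simp
  ultimately show ?thesis
    by (rule has_field_derivative_transform_within_open[OF _ open_greaterThanLessThan])
qed

lemma W_cont: "continuous_on {0<..<a} W"
  using W_deriv by (intro continuous_at_imp_continuous_on ballI) (meson DERIV_isCont)

lemma W_pos: "t \<in> {0<..<a} \<Longrightarrow> 0 < W t"
proof -
  assume t: "t \<in> {0<..<a}"
  have "W a < W t"
    apply (rule DERIV_neg_imp_decreasing_open[of t a W])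
    subgoal using t by auto
    subgoal for x using W_deriv[of x] w_pos[of x] t by (intro exI[of _ "- w x"]) auto
    subgoal using t W_cont' by auto
    done
  then show ?thesis using W_a by simp
qed

lemma W_mono: "0 < t \<Longrightarrow> t \<le> t' \<Longrightarrow> t' \<le> a \<Longrightarrow> W t' \<le> W t"
proof -
  assume h: "0 < t" "t \<le> t'" "t' \<le> a"
  have "integral {t..t'} w \<ge> 0"
    by (intro integral_nonneg integrable_continuous_interval continuous_on_subset[OF w_cont'[OF h(1)]])
       (use h w_pos in \<open>auto intro: less_imp_le\<close>)
  then show ?thesis using W_split[OF h] by simp
qed

lemma W_nonneg: "t \<in> {0<..a} \<Longrightarrow> 0 \<le> W t"
  using W_pos[of t] W_a by (cases "t = a") auto

lemma int_a:
  assumes t: "0 < t" "t < a"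
  shows "(\<integral>\<^sup>+s. ennreal (w s * W s powr (-1/p)) * indicator {t<..<a} s \<partial>lborel)
     \<le> ennreal ((p/(p-1)) * W t powr ((p-1)/p))"
proof -
  define G where "G s = - (p/(p-1)) * W s powr ((p-1)/p)" for s
  have cont: "continuous_on {t..a} G" unfolding G_def
    using t p_gt W_nonneg by (intro continuous_intros continuous_on_powr' W_cont') auto
  have der: "(G has_vector_derivative (w x * W x powr (-1/p))) (at x)" if x: "x \<in> {t<..<a}" for x
  proof -
    have xx: "x \<in> {0<..<a}" using x t by auto
    have "((\<lambda>s. W s powr ((p-1)/p)) has_real_derivative ((p-1)/p) * W x powr ((p-1)/p - of_nat 1) * (- w x)) (at x)"
      by (rule DERIV_fun_powr[OF W_deriv[OF xx] W_pos[OF xx]])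
    then have "(G has_real_derivative - (p/(p-1)) * (((p-1)/p) * W x powr ((p-1)/p - of_nat 1) * (- w x))) (at x)"
      unfolding G_def by (rule DERIV_cmult)
    moreover have "- (p/(p-1)) * (((p-1)/p) * W x powr ((p-1)/p - of_nat 1) * (- w x)) = w x * W x powr (-1/p)"
    proof -
      have "(p-1)/p - of_nat 1 = -1/p" using p_gt by (simp add: field_simps)
      then show ?thesis using p_gt by (simp add: field_simps)
    qed
    ultimately show ?thesis by (simp add: has_real_derivative_iff_has_vector_derivative)
  qed
  have "((\<lambda>s. w s * W s powr (-1/p)) has_integral G a - G t) {t..a}"
    using t cont der by (intro fundamental_theorem_of_calculus_interior) auto
  moreover have "G a - G t = (p/(p-1)) * W t powr ((p-1)/p)"
    unfolding G_def using W_a by simp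
  ultimately have eq: "(\<integral>\<^sup>+s. ennreal (w s * W s powr (-1/p)) * indicator {t..a} s \<partial>lborel)
     = ennreal ((p/(p-1)) * W t powr ((p-1)/p))"
    by (intro nn_integral_has_integral_lebesgue') (use t in \<open>auto intro!: mult_nonneg_nonneg w_pos[THEN less_imp_le]\<close>)
  show ?thesis
    unfolding eq[symmetric] by (intro nn_integral_mono mult_left_mono) (auto simp: indicator_def)
qed

lemma W_ne: "0 < x \<Longrightarrow> x < a \<Longrightarrow> W x \<noteq> 0"
  using W_pos[of x] by auto

lemma W_cont_open: "0 < c \<Longrightarrow> d < a \<Longrightarrow> continuous_on {c..d} W"
  using W_cont' by (rule continuous_on_subset) auto

lemma ind_meas:
  fixes f :: "real \<Rightarrow> real"
  assumes "A \<in> sets borel" "continuous_on A f"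
  shows "(\<lambda>x. ennreal (f x) * indicator A x) \<in> borel_measurable lborel"
proof -
  have "(\<lambda>x. ennreal (indicator A x *\<^sub>R f x)) \<in> borel_measurable borel"
    using borel_measurable_continuous_on_indicator[OF assms] by measurable
  moreover have "(\<lambda>x. ennreal (indicator A x *\<^sub>R f x)) = (\<lambda>x. ennreal (f x) * indicator A x)"
    by (auto simp: indicator_def)
  ultimately show ?thesis by simp
qed

lemma int_b:
  assumes s: "0 < s" "s < a"
  shows "(\<integral>\<^sup>+t. ennreal (w t * W t powr (-2 + 1/p)) * indicator {0<..<s} t \<partial>lborel)
     \<le> ennreal ((p/(p-1)) * W s powr (-(p-1)/p))"
proof -
  define f where "f t = w t * W t powr (-2 + 1/p)" for t
  define H where "H t = (p/(p-1)) * W t powr (-(p-1)/p)" for t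
  have Hnn: "0 \<le> H t" for t unfolding H_def using p_gt by simp
  have fcont: "continuous_on {e..s} f" if "0 < e" for e
    unfolding f_def using that s W_ne
    by (intro continuous_intros continuous_on_powr W_cont_open continuous_on_subset[OF w_cont']) fastforce+
  have bound: "(\<integral>\<^sup>+t. ennreal (f t) * indicator {e..s} t \<partial>lborel) \<le> ennreal (H s)"
    if e: "0 < e" "e \<le> s" for e
  proof -
    have der: "(H has_vector_derivative f x) (at x)" if x: "x \<in> {e<..<s}" for x
    proof -
      have xx: "x \<in> {0<..<a}" using x e s by auto
      have "((\<lambda>s. W s powr (-(p-1)/p)) has_real_derivative (-(p-1)/p) * W x powr (-(p-1)/p - of_nat 1) * (- w x)) (at x)"
        by (rule DERIV_fun_powr[OF W_deriv[OF xx] W_pos[OF xx]])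
      then have "(H has_real_derivative (p/(p-1)) * ((-(p-1)/p) * W x powr (-(p-1)/p - of_nat 1) * (- w x))) (at x)"
        unfolding H_def by (rule DERIV_cmult)
      moreover have "(p/(p-1)) * ((-(p-1)/p) * W x powr (-(p-1)/p - of_nat 1) * (- w x)) = f x"
      proof -
        have "-(p-1)/p - of_nat 1 = -2 + 1/p" using p_gt by (simp add: field_simps)
        then show ?thesis using p_gt by (simp add: field_simps f_def)
      qed
      ultimately show ?thesis by (simp add: has_real_derivative_iff_has_vector_derivative)
    qed
    have Hc: "continuous_on {e..s} H"
      unfolding H_def using that s W_ne
      by (intro continuous_intros continuous_on_powr W_cont_open) fastforce+
    have "(f has_integral H s - H e) {e..s}"
      using e Hc der by (intro fundamental_theorem_of_calculus_interior) auto
    then have "(\<integral>\<^sup>+t. ennreal (f t) * indicator {e..s} t \<partial>lborel) = ennreal (H s - H e)"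
      unfolding f_def
      by (intro nn_integral_has_integral_lebesgue') (use e s in \<open>auto intro!: mult_nonneg_nonneg w_pos[THEN less_imp_le]\<close>)
    also have "\<dots> \<le> ennreal (H s)" using Hnn[of e] by (intro ennreal_leI) auto
    finally show ?thesis .
  qed
  define e where "e n = s / real (Suc n)" for n
  have e: "0 < e n" "e n \<le> s" for n unfolding e_def using s by (auto simp: field_simps)
  have emono: "e (Suc n) \<le> e n" for n unfolding e_def using s by (auto simp: field_simps)
  have inc: "incseq (\<lambda>n t. ennreal (f t) * indicator {e n..s} t)"
    by (rule incseq_SucI) (auto simp: le_fun_def indicator_def intro: order_trans[OF emono])
  have meas: "(\<lambda>t. ennreal (f t) * indicator {e n..s} t) \<in> borel_measurable lborel" for n
    using e by (intro ind_meas fcont) auto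
  have sup: "(SUP n. ennreal (f t) * indicator {e n..s} t) \<ge> ennreal (f t) * indicator {0<..<s} t" for t
  proof (cases "0 < t \<and> t < s")
    case True
    obtain n :: nat where n0: "s / t < real n" using reals_Archimedean2 by blast
    then have "s / t < real (Suc n)" by simp
    then have "e n \<le> t" unfolding e_def using True by (simp add: field_simps)
    then have "ennreal (f t) * indicator {e n..s} t = ennreal (f t) * indicator {0<..<s} t"
      using True by (auto simp: indicator_def)
    then show ?thesis using SUP_upper[of n UNIV "\<lambda>n. ennreal (f t) * indicator {e n..s} t"] by simp
  qed (auto simp: indicator_def)
  have "(\<integral>\<^sup>+t. ennreal (f t) * indicator {0<..<s} t \<partial>lborel)
      \<le> (\<integral>\<^sup>+t. (SUP n. ennreal (f t) * indicator {e n..s} t) \<partial>lborel)"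
    by (intro nn_integral_mono sup)
  also have "\<dots> = (SUP n. \<integral>\<^sup>+t. ennreal (f t) * indicator {e n..s} t \<partial>lborel)"
    by (intro nn_integral_monotone_convergence_SUP inc meas)
  also have "\<dots> \<le> ennreal (H s)"
    by (intro SUP_least bound e)
  finally show ?thesis unfolding f_def H_def .
qed

lemma w_meas: "(\<lambda>t. indicator {0<..<a} t * w t) \<in> borel_measurable borel"
proof -
  have "continuous_on {0<..<a} w" by (rule continuous_on_subset[OF w_cont]) auto
  then show ?thesis using borel_measurable_continuous_on_indicator[of "{0<..<a}" w] by simp
qed

lemma W_meas: "(\<lambda>t. indicator {0<..<a} t * W t) \<in> borel_measurable borel"
  using borel_measurable_continuous_on_indicator[of "{0<..<a}" W] W_cont
  by auto

lemma phi_meas: "(\<lambda>t. indicator {0<..<a} t * \<phi> t) \<in> borel_measurable borel"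
proof -
  have "continuous_on {0<..<a} \<phi>" by (rule continuous_on_subset[OF phi_cont]) auto
  then show ?thesis using borel_measurable_continuous_on_indicator[of "{0<..<a}" \<phi>] by simp
qed

end

locale hardy_u = hardy +
  fixes u g :: "real \<Rightarrow> real"
  assumes E: "energy_space_with_deriv a p \<phi> u g"
begin

lemma g_int: "0 < e \<Longrightarrow> e \<le> a \<Longrightarrow> set_integrable lborel {e..a} g"
  using E unfolding energy_space_with_deriv_def W1p_with_deriv_def by auto

lemma u_ftc: "0 < x \<Longrightarrow> x \<le> y \<Longrightarrow> y \<le> a \<Longrightarrow> u y - u x = (LINT s:{x..y}|lborel. g s)"
  using E unfolding energy_space_with_deriv_def W1p_with_deriv_def by auto

lemma u_a: "u a = 0"
  using E unfolding energy_space_with_deriv_def by auto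

lemma g_meas: "(\<lambda>t. indicator {0<..<a} t * g t) \<in> borel_measurable borel"
proof (rule borel_measurable_LIMSEQ_real)
  define U where "U n t = indicator {0<..<a} t * (indicator {a / real (Suc n)..a} t *\<^sub>R g t)" for n t
  show "\<And>i. U i \<in> borel_measurable borel"
  proof -
    fix i
    have "(\<lambda>t. indicator {a / real (Suc i)..a} t *\<^sub>R g t) \<in> borel_measurable lborel"
      using g_int[of "a / real (Suc i)"] a_pos unfolding set_integrable_def
      by (intro borel_measurable_integrable) (auto simp: field_simps)
    then show "U i \<in> borel_measurable borel" unfolding U_def by measurable
  qed
  show "(\<lambda>i. U i t) \<longlonglongrightarrow> indicator {0<..<a} t * g t" for t
  proof (cases "0 < t \<and> t < a")
    case True
    obtain N :: nat where N0: "a / t < real N" using reals_Archimedean2 by blast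
    then have N: "a / t < real (Suc N)" by simp
    have "\<forall>n\<ge>N. U n t = indicator {0<..<a} t * g t"
    proof (intro allI impI)
      fix n assume "N \<le> n"
      then have "a / t < real (Suc n)" using N by (smt (verit) of_nat_le_iff Suc_le_mono)
      then have "a / real (Suc n) \<le> t" using True by (simp add: field_simps)
      then show "U n t = indicator {0<..<a} t * g t" unfolding U_def using True by (auto simp: indicator_def)
    qed
    then show ?thesis by (intro tendsto_eventually) (auto simp: eventually_sequentially)
  next
    case False
    then show ?thesis unfolding U_def by (auto simp: indicator_def)
  qed
qed

lemma u_bound: "0 < t \<Longrightarrow> t < a \<Longrightarrow>
   ennreal \<bar>u t\<bar> \<le> (\<integral>\<^sup>+s. ennreal \<bar>g s\<bar> * indicator {t<..<a} s \<partial>lborel)"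
proof -
  assume t: "0 < t" "t < a"
  have "u t = - (LINT s:{t..a}|lborel. g s)" using u_ftc[of t a] t u_a by simp
  then have "ennreal \<bar>u t\<bar> = ennreal (norm (LINT s:{t..a}|lborel. g s))" by simp
  also have "\<dots> \<le> (\<integral>\<^sup>+s. norm (indicator {t..a} s *\<^sub>R g s) \<partial>lborel)"
    unfolding set_lebesgue_integral_def
    using g_int[of t] t unfolding set_integrable_def by (intro integral_norm_bound_ennreal) auto
  also have "\<dots> = (\<integral>\<^sup>+s. ennreal \<bar>g s\<bar> * indicator {t<..<a} s \<partial>lborel)"
    by (intro nn_integral_cong_AE eventually_mono[OF eventually_conj[OF AE_lborel_singleton[of t] AE_lborel_singleton[of a]]])
       (auto simp: indicator_def)
  finally show ?thesis .
qed

end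


context hardy_u begin

lemma w_powr_phi: "s \<in> {0<..a} \<Longrightarrow> w s powr (-(p-1)) = \<phi> s"
proof -
  assume s: "s \<in> {0<..a}"
  have "-1 / (p - 1) * -(p-1) = 1" using p_gt by (simp add: field_simps)
  then show ?thesis unfolding w_def using phi_pos[OF s] by (simp add: powr_powr)
qed

lemma pointwise:
  assumes t: "0 < t" "t < a"
  shows "ennreal (\<bar>u t\<bar> powr p) \<le> ennreal ((p/(p-1)) powr (p-1) * W t powr ((p-1)^2/p)) *
    (\<integral>\<^sup>+s. ennreal (\<bar>g s\<bar> powr p * \<phi> s * W s powr ((p-1)/p)) * indicator {t<..<a} s \<partial>lborel)"
    (is "_ \<le> ennreal ?c * ?I")
proof -
  define pp where "pp = p/(p-1)"
  have pp1: "pp > 1" unfolding pp_def using p_gt by (simp add: field_simps)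
  have cpos: "?c > 0" using W_pos[of t] t p_gt by simp
  show ?thesis
  proof (cases "?I = top")
    case True
    have "ennreal ?c * ?I = top" unfolding True using cpos p_gt W_pos[of t] t by (simp add: ennreal_mult_top)
    then show ?thesis by (simp del: ennreal_mult_eq_top_iff)
  next
    case False
    then obtain A where A: "?I = ennreal A" "0 \<le> A" by (cases ?I) auto
    define gm where "gm s = indicator {0<..<a} s * g s" for s
    define wm where "wm s = indicator {0<..<a} s * w s" for s
    define Wm where "Wm s = indicator {0<..<a} s * W s" for s
    define F where "F s = indicator {t<..<a} s * (\<bar>gm s\<bar> * wm s powr (-(p-1)/p) * Wm s powr ((p-1)/p^2))" for s
    define Hh where "Hh s = indicator {t<..<a} s * (wm s powr ((p-1)/p) * Wm s powr (-(p-1)/p^2))" for s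
    have gm: "gm \<in> borel_measurable lborel" unfolding gm_def using g_meas by simp
    have wm: "wm \<in> borel_measurable lborel" unfolding wm_def using w_meas by simp
    have Wm: "Wm \<in> borel_measurable lborel" unfolding Wm_def using W_meas by simp
    have Fm: "F \<in> borel_measurable lborel" unfolding F_def using gm wm Wm by measurable
    have Hm: "Hh \<in> borel_measurable lborel" unfolding Hh_def using wm Wm by measurable
    have in_s: "s \<in> {0<..<a}" "s \<in> {0<..a}" if "s \<in> {t<..<a}" for s using that t by auto
    have Fp: "ennreal (F s powr p) = ennreal (\<bar>g s\<bar> powr p * \<phi> s * W s powr ((p-1)/p)) * indicator {t<..<a} s" for s
    proof (cases "s \<in> {t<..<a}")
      case True
      have wpos: "w s > 0" using w_pos in_s[OF True] by auto
      have Wpos: "W s > 0" using W_pos in_s[OF True] by auto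
      have "F s powr p = \<bar>g s\<bar> powr p * (w s powr (-(p-1)/p)) powr p * (W s powr ((p-1)/p^2)) powr p"
        unfolding F_def gm_def wm_def Wm_def using True in_s[OF True] by (simp add: powr_mult)
      also have "\<dots> = \<bar>g s\<bar> powr p * w s powr (-(p-1)) * W s powr ((p-1)/p)"
        using p_gt by (simp add: powr_powr power2_eq_square)
      also have "\<dots> = \<bar>g s\<bar> powr p * \<phi> s * W s powr ((p-1)/p)"
        using w_powr_phi in_s[OF True] by simp
      finally show ?thesis using True by simp
    qed (simp add: F_def)
    have Hq: "ennreal (Hh s powr pp) = ennreal (w s * W s powr (-1/p)) * indicator {t<..<a} s" for s
    proof (cases "s \<in> {t<..<a}")
      case True
      have wpos: "w s > 0" using w_pos in_s[OF True] by auto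
      have "Hh s powr pp = (w s powr ((p-1)/p)) powr pp * (W s powr (-(p-1)/p^2)) powr pp"
        unfolding Hh_def wm_def Wm_def using True in_s[OF True] by (simp add: powr_mult)
      also have "\<dots> = w s * W s powr (-1/p)"
      proof -
        have "(1 - p) / (p * (p - 1)) = -(1/p)" using p_gt by (simp add: field_simps)
        then show ?thesis using p_gt wpos unfolding pp_def by (simp add: powr_powr power2_eq_square)
      qed
      finally show ?thesis using True by simp
    qed (simp add: Hh_def pp_def)
    have FH: "ennreal (F s * Hh s) = ennreal \<bar>g s\<bar> * indicator {t<..<a} s" for s
    proof (cases "s \<in> {t<..<a}")
      case True
      have wpos: "w s > 0" using w_pos in_s[OF True] by auto
      have Wpos: "W s > 0" using W_pos in_s[OF True] by auto
      have "F s * Hh s = \<bar>g s\<bar> * (w s powr (-(p-1)/p) * w s powr ((p-1)/p)) * (W s powr ((p-1)/p^2) * W s powr (-(p-1)/p^2))"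
        unfolding F_def Hh_def gm_def wm_def Wm_def using True in_s[OF True] by (simp add: algebra_simps)
      also have "\<dots> = \<bar>g s\<bar>"
      proof -
        have "(1 - p) / p + (p - 1) / p = 0" "(p - 1) / p\<^sup>2 + (1 - p) / p\<^sup>2 = 0"
          using p_gt by (simp_all add: field_simps)
        then show ?thesis using wpos Wpos by (simp add: powr_add[symmetric])
      qed
      finally show ?thesis using True by simp
    qed (simp add: F_def)
    define B where "B = pp * W t powr ((p-1)/p)"
    have Bpos: "B > 0" unfolding B_def using pp1 W_pos[of t] t by simp
    have hB: "(\<integral>\<^sup>+s. ennreal (Hh s powr pp) \<partial>lborel) \<le> ennreal B"
      unfolding Hq unfolding B_def pp_def using int_a[OF t] by simp
    have hA: "(\<integral>\<^sup>+s. ennreal (F s powr p) \<partial>lborel) = ennreal A"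
      unfolding Fp using A by simp
    have F0: "0 \<le> F s" for s unfolding F_def by simp
    have H0: "0 \<le> Hh s" for s unfolding Hh_def by simp
    have "ennreal \<bar>u t\<bar> \<le> (\<integral>\<^sup>+s. ennreal (F s * Hh s) \<partial>lborel)"
      unfolding FH using u_bound[OF t] .
    also have "\<dots> \<le> ennreal (A powr (1/p) * B powr (1/pp))"
      by (rule holder_nn[OF p_gt pp_def Fm Hm F0 H0 hB Bpos hA A(2)])
    finally have ub: "\<bar>u t\<bar> \<le> A powr (1/p) * B powr (1/pp)"
      using A(2) Bpos by (simp add: ennreal_le_iff)
    have "\<bar>u t\<bar> powr p \<le> (A powr (1/p) * B powr (1/pp)) powr p"
      using ub p_gt by (intro powr_mono2) auto
    also have "\<dots> = A * B powr (p-1)"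
      using A(2) Bpos p_gt unfolding pp_def by (simp add: powr_mult powr_powr)
    also have "B powr (p-1) = ?c"
    proof -
      have "B powr (p-1) = pp powr (p-1) * (W t powr ((p-1)/p)) powr (p-1)"
        unfolding B_def using pp1 W_pos[of t] t by (simp add: powr_mult)
      also have "(W t powr ((p-1)/p)) powr (p-1) = W t powr ((p-1)^2/p)"
        by (simp add: powr_powr power2_eq_square)
      finally show ?thesis unfolding pp_def .
    qed
    finally have "\<bar>u t\<bar> powr p \<le> A * ?c" .
    then have "ennreal (\<bar>u t\<bar> powr p) \<le> ennreal (?c * A)" by (simp add: mult.commute ennreal_leI)
    also have "\<dots> = ennreal ?c * ?I" using A cpos by (simp add: ennreal_mult)
    finally show ?thesis .
  qed
qed

end


context hardy_u begin

lemma main_ineq: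
  "ennreal (((p - 1) / p) powr p) *
     (\<integral>\<^sup>+ t\<in>{0<..<a}. ennreal (\<bar>u t\<bar> powr p * eta a p \<phi> t powr p * \<phi> t) \<partial>lborel)
   \<le> (\<integral>\<^sup>+ t\<in>{0<..<a}. ennreal (\<bar>g t\<bar> powr p * \<phi> t) \<partial>lborel)"
proof -
  define pp where "pp = p/(p-1)"
  have pp1: "pp > 1" unfolding pp_def using p_gt by (simp add: field_simps)
  define gm where "gm s = indicator {0<..<a} s * g s" for s
  define wm where "wm s = indicator {0<..<a} s * w s" for s
  define Wm where "Wm s = indicator {0<..<a} s * W s" for s
  define fm where "fm s = indicator {0<..<a} s * \<phi> s" for s
  have [measurable]: "gm \<in> borel_measurable borel" unfolding gm_def using g_meas by simp
  have [measurable]: "wm \<in> borel_measurable borel" unfolding wm_def using w_meas by simp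
  have [measurable]: "Wm \<in> borel_measurable borel" unfolding Wm_def using W_meas by simp
  have [measurable]: "fm \<in> borel_measurable borel" unfolding fm_def using phi_meas by simp
  define al where "al t = wm t * Wm t powr (-2 + 1/p)" for t
  define be where "be s = \<bar>gm s\<bar> powr p * fm s * Wm s powr ((p-1)/p)" for s
  have [measurable]: "al \<in> borel_measurable borel" unfolding al_def by measurable
  have [measurable]: "be \<in> borel_measurable borel" unfolding be_def by measurable
  define K where "K t s = (if 0 < t \<and> t < s \<and> s < a then ennreal (pp powr (p-1) * al t * be s) else 0)" for t s
  have Km: "case_prod K \<in> borel_measurable (lborel \<Otimes>\<^sub>M lborel)"
    unfolding K_def by measurable
  have al0: "0 \<le> al t" for t unfolding al_def wm_def by (auto simp: indicator_def intro!: mult_nonneg_nonneg less_imp_le[OF w_pos])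
  have be0: "0 \<le> be s" for s unfolding be_def fm_def by (auto simp: indicator_def intro!: mult_nonneg_nonneg less_imp_le[OF phi_pos])
  have stepA: "ennreal (\<bar>u t\<bar> powr p * eta a p \<phi> t powr p * \<phi> t) * indicator {0<..<a} t \<le> (\<integral>\<^sup>+s. K t s \<partial>lborel)" for t
  proof (cases "t \<in> {0<..<a}")
    case False then show ?thesis by simp
  next
    case True
    then have t: "0 < t" "t < a" by auto
    have wt: "w t > 0" using w_pos t by auto
    have Wt: "W t > 0" using W_pos t by auto
    let ?c = "(p/(p-1)) powr (p-1) * W t powr ((p-1)^2/p)"
    let ?I = "(\<integral>\<^sup>+s. ennreal (\<bar>g s\<bar> powr p * \<phi> s * W s powr ((p-1)/p)) * indicator {t<..<a} s \<partial>lborel)"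
    have I_eq: "?I = (\<integral>\<^sup>+s. ennreal (be s) * indicator {t<..<a} s \<partial>lborel)"
      by (intro nn_integral_cong) (use t in \<open>auto simp: be_def gm_def fm_def Wm_def indicator_def\<close>)
    have eta_eq': "eta a p \<phi> t powr p * \<phi> t = w t * W t powr (-p)"
    proof -
      have "eta a p \<phi> t powr p * \<phi> t = w t powr p * \<phi> t / W t powr p"
        unfolding eta_eq using wt Wt by (simp add: powr_divide)
      also have "w t powr p * \<phi> t = w t"
      proof -
        have "w t powr p * \<phi> t = w t powr p * w t powr (-(p-1))" using w_powr_phi[of t] t by simp
        also have "\<dots> = w t" using wt by (simp add: powr_add[symmetric])
        finally show ?thesis .
      qed
      finally show ?thesis using Wt by (simp add: powr_minus divide_inverse)
    qed
    have "ennreal (\<bar>u t\<bar> powr p * eta a p \<phi> t powr p * \<phi> t) = ennreal (\<bar>u t\<bar> powr p) * ennreal (w t * W t powr (-p))"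
      unfolding mult.assoc eta_eq'[unfolded mult.assoc] using wt by (simp add: ennreal_mult)
    also have "\<dots> \<le> (ennreal ?c * ?I) * ennreal (w t * W t powr (-p))"
      by (intro mult_right_mono pointwise[OF t]) auto
    also have "\<dots> = ennreal (?c * (w t * W t powr (-p))) * ?I"
      using wt Wt by (simp add: ennreal_mult mult_ac)
    also have "?c * (w t * W t powr (-p)) = pp powr (p-1) * al t"
    proof -
      have "W t powr ((p-1)^2/p) * W t powr (-p) = W t powr (-2 + 1/p)"
      proof -
        have "(p-1)^2/p + (-p) = -2 + 1/p" using p_gt by (simp add: field_simps power2_eq_square)
        then show ?thesis using Wt by (simp add: powr_add[symmetric])
      qed
      then show ?thesis unfolding al_def wm_def Wm_def pp_def using t by (simp add: mult_ac)
    qed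
    also have "ennreal (pp powr (p-1) * al t) * ?I = (\<integral>\<^sup>+s. ennreal (pp powr (p-1) * al t) * (ennreal (be s) * indicator {t<..<a} s) \<partial>lborel)"
      unfolding I_eq by (rule nn_integral_cmult[symmetric]) measurable
    also have "\<dots> = (\<integral>\<^sup>+s. K t s \<partial>lborel)"
      using t al0[of t] be0 pp1 by (intro nn_integral_cong) (auto simp: K_def indicator_def ennreal_mult)
    finally show ?thesis using True by simp
  qed
  have stepC: "(\<integral>\<^sup>+t. K t s \<partial>lborel) \<le> ennreal (pp powr p) * (ennreal (\<bar>gm s\<bar> powr p * fm s) * indicator {0<..<a} s)" for s
  proof (cases "s \<in> {0<..<a}")
    case False
    then have "K t s = 0" for t unfolding K_def by auto
    then show ?thesis by simp
  next
    case True
    then have s: "0 < s" "s < a" by auto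
    have Ws: "W s > 0" using W_pos s by auto
    have "(\<integral>\<^sup>+t. K t s \<partial>lborel) = (\<integral>\<^sup>+t. ennreal (pp powr (p-1) * be s) * (ennreal (al t) * indicator {0<..<s} t) \<partial>lborel)"
      using s al0 be0 pp1 by (intro nn_integral_cong) (auto simp: K_def indicator_def ennreal_mult mult_ac)
    also have "\<dots> = ennreal (pp powr (p-1) * be s) * (\<integral>\<^sup>+t. ennreal (al t) * indicator {0<..<s} t \<partial>lborel)"
      by (rule nn_integral_cmult) measurable
    also have "\<dots> = ennreal (pp powr (p-1) * be s) * (\<integral>\<^sup>+t. ennreal (w t * W t powr (-2 + 1/p)) * indicator {0<..<s} t \<partial>lborel)"
      apply (rule arg_cong2[where f="(*)"], rule refl, rule nn_integral_cong)
      subgoal for x using s by (cases "0 < x \<and> x < s") (auto simp: al_def wm_def Wm_def indicator_def)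
      done
    also have "\<dots> \<le> ennreal (pp powr (p-1) * be s) * ennreal (pp * W s powr (-(p-1)/p))"
      using int_b[OF s] unfolding pp_def by (intro mult_left_mono) auto
    also have "\<dots> = ennreal (pp powr (p-1) * be s * (pp * W s powr (-(p-1)/p)))"
      using be0[of s] pp1 by (simp add: ennreal_mult)
    also have "pp powr (p-1) * be s * (pp * W s powr (-(p-1)/p)) = pp powr p * (\<bar>gm s\<bar> powr p * fm s)"
    proof -
      have "W s powr ((p-1)/p) * W s powr (-(p-1)/p) = 1"
      proof -
        have "(p - 1) / p + (1 - p) / p = 0" using p_gt by (simp add: field_simps)
        then show ?thesis using Ws by (simp add: powr_add[symmetric])
      qed
      moreover have "pp powr (p-1) * pp = pp powr p"
        using pp1 powr_add[of pp "p-1" 1] by simp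
      moreover have Wm: "Wm s = W s" using s by (simp add: Wm_def)
      moreover have "pp powr (p-1) * be s * (pp * W s powr (-(p-1)/p))
         = (pp powr (p-1) * pp) * (\<bar>gm s\<bar> powr p * fm s) * (W s powr ((p-1)/p) * W s powr (-(p-1)/p))"
        unfolding be_def Wm by (simp only: mult_ac)
      ultimately show ?thesis by simp
    qed
    finally have fin: "(\<integral>\<^sup>+t. K t s \<partial>lborel) \<le> ennreal (pp powr p * (\<bar>gm s\<bar> powr p * fm s))" .
    have "0 \<le> \<bar>gm s\<bar> powr p * fm s" using s phi_pos[of s] by (simp add: fm_def)
    then have "ennreal (pp powr p * (\<bar>gm s\<bar> powr p * fm s)) = ennreal (pp powr p) * (ennreal (\<bar>gm s\<bar> powr p * fm s) * indicator {0<..<a} s)"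
      using True by (simp add: ennreal_mult)
    then show ?thesis using fin by simp
  qed
  have "(\<integral>\<^sup>+ t\<in>{0<..<a}. ennreal (\<bar>u t\<bar> powr p * eta a p \<phi> t powr p * \<phi> t) \<partial>lborel)
      \<le> (\<integral>\<^sup>+t. (\<integral>\<^sup>+s. K t s \<partial>lborel) \<partial>lborel)"
    by (intro nn_integral_mono stepA)
  also have "\<dots> = (\<integral>\<^sup>+s. (\<integral>\<^sup>+t. K t s \<partial>lborel) \<partial>lborel)"
    by (rule lborel_pair.Fubini'[OF Km, symmetric])
  also have "\<dots> \<le> (\<integral>\<^sup>+s. ennreal (pp powr p) * (ennreal (\<bar>gm s\<bar> powr p * fm s) * indicator {0<..<a} s) \<partial>lborel)"
    by (intro nn_integral_mono stepC)
  also have "\<dots> = ennreal (pp powr p) * (\<integral>\<^sup>+s. ennreal (\<bar>gm s\<bar> powr p * fm s) * indicator {0<..<a} s \<partial>lborel)"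
    by (rule nn_integral_cmult) measurable
  also have "(\<integral>\<^sup>+s. ennreal (\<bar>gm s\<bar> powr p * fm s) * indicator {0<..<a} s \<partial>lborel)
     = (\<integral>\<^sup>+ t\<in>{0<..<a}. ennreal (\<bar>g t\<bar> powr p * \<phi> t) \<partial>lborel)"
    by (intro nn_integral_cong) (auto simp: gm_def fm_def indicator_def)
  finally have X: "(\<integral>\<^sup>+ t\<in>{0<..<a}. ennreal (\<bar>u t\<bar> powr p * eta a p \<phi> t powr p * \<phi> t) \<partial>lborel)
     \<le> ennreal (pp powr p) * (\<integral>\<^sup>+ t\<in>{0<..<a}. ennreal (\<bar>g t\<bar> powr p * \<phi> t) \<partial>lborel)" .
  have cc: "ennreal (((p - 1) / p) powr p) * ennreal (pp powr p) = 1"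
  proof -
    have "((p - 1) / p) powr p * pp powr p = 1"
      unfolding pp_def using p_gt by (simp add: powr_mult[symmetric])
    then show ?thesis using p_gt by (simp add: ennreal_mult[symmetric])
  qed
  have "ennreal (((p - 1) / p) powr p) * (\<integral>\<^sup>+ t\<in>{0<..<a}. ennreal (\<bar>u t\<bar> powr p * eta a p \<phi> t powr p * \<phi> t) \<partial>lborel)
      \<le> ennreal (((p - 1) / p) powr p) * (ennreal (pp powr p) * (\<integral>\<^sup>+ t\<in>{0<..<a}. ennreal (\<bar>g t\<bar> powr p * \<phi> t) \<partial>lborel))"
    by (intro mult_left_mono X) auto
  also have "\<dots> = (\<integral>\<^sup>+ t\<in>{0<..<a}. ennreal (\<bar>g t\<bar> powr p * \<phi> t) \<partial>lborel)"
    unfolding mult.assoc[symmetric] cc by simp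
  finally show ?thesis .
qed

end



context hardy begin

lemma w_phi: "t \<in> {0<..a} \<Longrightarrow> w t powr p * \<phi> t = w t"
proof -
  assume t: "t \<in> {0<..a}"
  have wt: "w t > 0" using w_pos t by auto
  have "-1 / (p - 1) * -(p-1) = 1" using p_gt by (simp add: field_simps)
  then have "\<phi> t = w t powr (-(p-1))" unfolding w_def using phi_pos[OF t] by (simp add: powr_powr)
  then show ?thesis using wt powr_add[of "w t" p "1-p"] by simp
qed

lemma eta_phi: "t \<in> {0<..<a} \<Longrightarrow> eta a p \<phi> t powr p * \<phi> t = w t * W t powr (-p)"
proof -
  assume t: "t \<in> {0<..<a}"
  have wt: "w t > 0" using w_pos t by auto
  have Wt: "W t > 0" using W_pos t by auto
  have "eta a p \<phi> t powr p * \<phi> t = (w t powr p * \<phi> t) / W t powr p"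
    unfolding eta_eq using wt Wt by (simp add: powr_divide)
  also have "w t powr p * \<phi> t = w t" using w_phi t by auto
  finally show ?thesis using Wt by (simp add: powr_minus divide_inverse)
qed

end

locale hardy_sharp = hardy +
  fixes \<beta> t1 :: real
  assumes beta: "(p-1)/p < \<beta>" "\<beta> < 1"
    and t1: "a/2 < t1" "t1 < a"
begin

definition "L = W (a/2)"
definition "s0 = W t1"
definition "us t = (if t \<le> a/2 then L powr \<beta> else if t \<le> t1 then W t powr \<beta> else s0 powr (\<beta>-1) * W t)"
definition "gs t = (if t < a/2 then 0 else if t < t1 then -(\<beta> * W t powr (\<beta>-1) * w t) else -(s0 powr (\<beta>-1) * w t))"
definition "h1 t = -(\<beta> * W t powr (\<beta>-1) * w t)"
definition "h2 t = -(s0 powr (\<beta>-1) * w t)"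
definition "k1 t = \<beta> powr p * (W t powr ((\<beta>-1)*p) * w t)"
definition "k2 t = s0 powr ((\<beta>-1)*p) * w t"

lemma beta_pos: "\<beta> > 0" using beta p_gt by (smt (verit) divide_pos_pos)
lemma a2: "0 < a/2" "a/2 < a" using a_pos by auto
lemma L_pos: "L > 0" unfolding L_def using W_pos a2 by auto
lemma s0_pos: "s0 > 0" unfolding s0_def using W_pos t1 a2 by auto
lemma W_ge_s0: "t \<le> t1 \<Longrightarrow> 0 < t \<Longrightarrow> s0 \<le> W t" unfolding s0_def using W_mono t1 by auto
lemma W_le_L: "a/2 \<le> t \<Longrightarrow> t \<le> a \<Longrightarrow> W t \<le> L" unfolding L_def using W_mono a2 by auto

lemma W_posI: "0 < t \<Longrightarrow> t \<le> t1 \<Longrightarrow> W t > 0" using W_ge_s0 s0_pos by force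

lemma us_cont: "continuous_on {0..a} us"
  unfolding us_def
proof (rule continuous_on_cases_le[where h="\<lambda>x. x"])
  show "continuous_on {x \<in> {0..a}. x \<le> a/2} (\<lambda>t. L powr \<beta>)" by simp
  show "continuous_on {x \<in> {0..a}. a/2 \<le> x} (\<lambda>t. if t \<le> t1 then W t powr \<beta> else s0 powr (\<beta>-1) * W t)"
  proof (rule continuous_on_cases_le[where h="\<lambda>x. x"])
    have Wc: "continuous_on {x \<in> {0..a}. a/2 \<le> x} W"
      by (rule continuous_on_subset[OF W_cont'[OF a2(1)]]) auto
    show "continuous_on {x \<in> {x \<in> {0..a}. a/2 \<le> x}. x \<le> t1} (\<lambda>t. W t powr \<beta>)"
      using beta_pos W_nonneg a2
      by (intro continuous_on_powr' continuous_on_subset[OF Wc] continuous_on_const) auto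
    show "continuous_on {x \<in> {x \<in> {0..a}. a/2 \<le> x}. t1 \<le> x} (\<lambda>t. s0 powr (\<beta>-1) * W t)"
      by (intro continuous_intros continuous_on_subset[OF Wc]) auto
    show "continuous_on {x \<in> {0..a}. a/2 \<le> x} (\<lambda>x. x)" by (intro continuous_intros)
    show "\<And>x. x \<in> {x \<in> {0..a}. a/2 \<le> x} \<Longrightarrow> x = t1 \<Longrightarrow> W x powr \<beta> = s0 powr (\<beta>-1) * W x"
      using s0_pos powr_add[of "W t1" "\<beta>-1" 1] by (simp add: s0_def)
  qed
  show "continuous_on {0..a} (\<lambda>x. x)" by (intro continuous_intros)
  show "\<And>x. x \<in> {0..a} \<Longrightarrow> x = a/2 \<Longrightarrow> L powr \<beta> = (if x \<le> t1 then W x powr \<beta> else s0 powr (\<beta>-1) * W x)"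
  proof -
    fix x assume x: "x = a/2"
    then have "x \<le> t1" using t1 by simp
    then show "L powr \<beta> = (if x \<le> t1 then W x powr \<beta> else s0 powr (\<beta>-1) * W x)"
      unfolding L_def x by simp
  qed
qed

lemma w_cont_sub: "0 < c \<Longrightarrow> {c..d} \<subseteq> {c..a} \<Longrightarrow> continuous_on {c..d} w"
  by (rule continuous_on_subset[OF w_cont']) auto

lemma W_cont_sub: "0 < c \<Longrightarrow> {c..d} \<subseteq> {c..a} \<Longrightarrow> continuous_on {c..d} W"
  by (rule continuous_on_subset[OF W_cont']) auto

lemma W_ne1: assumes "t \<in> {a/2..t1}" shows "W t \<noteq> 0"
proof -
  have "0 < t" "t \<le> t1" using assms a2 by auto
  then show ?thesis using W_posI by fastforce
qed

lemma h1_cont: "continuous_on {a/2..t1} h1"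
  unfolding h1_def using a2 t1 W_ne1
  by (intro continuous_intros continuous_on_powr w_cont_sub W_cont_sub) auto

lemma h2_cont: "continuous_on {t1..a} h2"
  unfolding h2_def using a2 t1
  by (intro continuous_intros w_cont_sub) auto

lemma k1_cont: "continuous_on {a/2..t1} k1"
  unfolding k1_def using a2 t1 W_ne1
  by (intro continuous_intros continuous_on_powr w_cont_sub W_cont_sub) auto

lemma k2_cont: "continuous_on {t1..a} k2"
  unfolding k2_def using a2 t1
  by (intro continuous_intros w_cont_sub) auto

lemma int_sum:
  fixes f1 f2 :: "real \<Rightarrow> real"
  assumes "continuous_on {a/2..t1} f1" "continuous_on {t1..a} f2"
  shows "integrable lborel (\<lambda>t. indicator {a/2..<t1} t * f1 t + indicator {t1..a} t * f2 t)"
proof -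
  have "set_integrable lborel {a/2..<t1} f1"
    by (rule set_integrable_subset[OF borel_integrable_atLeastAtMost'[OF assms(1)]]) auto
  moreover have "set_integrable lborel {t1..a} f2"
    by (rule borel_integrable_atLeastAtMost'[OF assms(2)])
  ultimately have i1: "integrable lborel (\<lambda>t. indicator {a/2..<t1} t * f1 t)"
    and i2: "integrable lborel (\<lambda>t. indicator {t1..a} t * f2 t)"
    unfolding set_integrable_def by simp_all
  show ?thesis using Bochner_Integration.integrable_add[OF i1 i2] by simp
qed

lemma int_sum_set:
  fixes f f1 f2 :: "real \<Rightarrow> real"
  assumes "continuous_on {a/2..t1} f1" "continuous_on {t1..a} f2" "S \<in> sets borel" "S \<subseteq> {0..a}"
    and "\<And>t. t \<in> {0..a} \<Longrightarrow> f t = indicator {a/2..<t1} t * f1 t + indicator {t1..a} t * f2 t"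
  shows "set_integrable lborel S f"
proof -
  have "set_integrable lborel S (\<lambda>t. indicator {a/2..<t1} t * f1 t + indicator {t1..a} t * f2 t)"
    unfolding set_integrable_def
    by (rule integrable_mult_indicator) (use assms(3) int_sum[OF assms(1,2)] in auto)
  then show ?thesis by (rule set_integrable_cong[THEN iffD1, rotated 3]) (use assms(4,5) in auto)
qed

lemma gs_eq: "t \<in> {0..a} \<Longrightarrow> gs t = indicator {a/2..<t1} t * h1 t + indicator {t1..a} t * h2 t"
  unfolding gs_def h1_def h2_def using t1 by (auto simp: indicator_def)

lemma gsp_eq: "t \<in> {0..a} \<Longrightarrow> \<bar>gs t\<bar> powr p * \<phi> t = indicator {a/2..<t1} t * k1 t + indicator {t1..a} t * k2 t"
proof -
  assume t: "t \<in> {0..a}"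
  consider "t < a/2" | "a/2 \<le> t" "t < t1" | "t1 \<le> t" by linarith
  then show ?thesis
  proof cases
    case 1 then show ?thesis using t1 by (simp add: gs_def indicator_def)
  next
    case 2
    have tt: "t \<in> {0<..a}" using 2 a2 t1 by auto
    have wt: "w t > 0" using w_pos tt by auto
    have Wt: "W t > 0" using W_posI 2 a2 by auto
    have "\<bar>gs t\<bar> powr p * \<phi> t = (\<beta> * W t powr (\<beta>-1) * w t) powr p * \<phi> t"
      using 2 beta_pos wt by (simp add: gs_def abs_mult)
    also have "\<dots> = \<beta> powr p * (W t powr ((\<beta>-1)*p)) * (w t powr p * \<phi> t)"
      using beta_pos wt Wt by (simp add: powr_mult powr_powr)
    also have "\<dots> = k1 t" unfolding k1_def using w_phi[OF tt] by simp
    finally show ?thesis using 2 by (simp add: indicator_def)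
  next
    case 3
    have tt: "t \<in> {0<..a}" using 3 a2 t1 t by auto
    have wt: "w t > 0" using w_pos tt by auto
    have "\<bar>gs t\<bar> powr p * \<phi> t = (s0 powr (\<beta>-1) * w t) powr p * \<phi> t"
      using 3 t1 wt by (simp add: gs_def abs_mult)
    also have "\<dots> = s0 powr ((\<beta>-1)*p) * (w t powr p * \<phi> t)"
      using s0_pos wt by (simp add: powr_mult powr_powr)
    also have "\<dots> = k2 t" unfolding k2_def using w_phi[OF tt] by simp
    finally show ?thesis using 3 t by (simp add: indicator_def)
  qed
qed

lemma us_deriv: "t \<in> {0<..<a} \<Longrightarrow> t \<noteq> a/2 \<Longrightarrow> t \<noteq> t1 \<Longrightarrow> (us has_real_derivative gs t) (at t)"
proof -
  assume t: "t \<in> {0<..<a}" "t \<noteq> a/2" "t \<noteq> t1"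
  consider "t < a/2" | "a/2 < t" "t < t1" | "t1 < t" using t by linarith
  then show ?thesis
  proof cases
    case 1
    have d: "((\<lambda>_. L powr \<beta>) has_real_derivative 0) (at t)" by simp
    have eq: "L powr \<beta> = us x" if "x \<in> {..<a/2}" for x using that by (simp add: us_def)
    have "(us has_real_derivative 0) (at t)"
      by (rule has_field_derivative_transform_within_open[OF d open_lessThan[of "a/2"] _ eq]) (use 1 in auto)
    moreover have "gs t = 0" using 1 by (simp add: gs_def)
    ultimately show ?thesis by simp
  next
    case 2
    have tt: "t \<in> {0<..<a}" using t by auto
    have "((\<lambda>s. W s powr \<beta>) has_real_derivative \<beta> * W t powr (\<beta> - of_nat 1) * (- w t)) (at t)"
      by (rule DERIV_fun_powr[OF W_deriv[OF tt] W_pos[OF tt]])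
    moreover have "\<beta> * W t powr (\<beta> - of_nat 1) * (- w t) = gs t" using 2 by (simp add: gs_def)
    ultimately have d: "((\<lambda>s. W s powr \<beta>) has_real_derivative gs t) (at t)" by simp
    have eq: "W x powr \<beta> = us x" if "x \<in> {a/2<..<t1}" for x using that by (simp add: us_def)
    have tin: "t \<in> {a/2<..<t1}" using 2 by auto
    show ?thesis by (rule has_field_derivative_transform_within_open[OF d open_greaterThanLessThan tin eq])
  next
    case 3
    have tt: "t \<in> {0<..<a}" using t by auto
    have "((\<lambda>s. s0 powr (\<beta>-1) * W s) has_real_derivative s0 powr (\<beta>-1) * (- w t)) (at t)"
      by (rule DERIV_cmult[OF W_deriv[OF tt]])
    moreover have "s0 powr (\<beta>-1) * (- w t) = gs t" using 3 t1 by (simp add: gs_def)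
    ultimately have d: "((\<lambda>s. s0 powr (\<beta>-1) * W s) has_real_derivative gs t) (at t)" by simp
    have eq: "s0 powr (\<beta>-1) * W x = us x" if "x \<in> {t1<..<a}" for x using that t1 by (simp add: us_def)
    have tin: "t \<in> {t1<..<a}" using 3 t by auto
    show ?thesis by (rule has_field_derivative_transform_within_open[OF d open_greaterThanLessThan tin eq])
  qed
qed

lemma gs_int: "S \<in> sets borel \<Longrightarrow> S \<subseteq> {0..a} \<Longrightarrow> set_integrable lborel S gs"
  by (rule int_sum_set[OF h1_cont h2_cont]) (auto simp: gs_eq)

lemma us_ftc:
  assumes xy: "0 < x" "x \<le> y" "y \<le> a"
  shows "us y - us x = (LINT s:{x..y}|lborel. gs s)"
proof -
  have "(gs has_integral us y - us x) {x..y}"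
  proof (rule fundamental_theorem_of_calculus_strong[of "{a/2, t1, a}"])
    show "finite {a/2, t1, a}" by simp
    show "x \<le> y" by fact
    show "(us has_vector_derivative gs t) (at t)" if "t \<in> {x..y} - {a/2, t1, a}" for t
      using us_deriv[of t] that xy by (auto simp: has_real_derivative_iff_has_vector_derivative)
    show "continuous_on {x..y} us" by (rule continuous_on_subset[OF us_cont]) (use xy in auto)
  qed
  moreover have "set_integrable lborel {x..y} gs" by (rule gs_int) (use xy in auto)
  ultimately show ?thesis using set_borel_integral_eq_integral(2) by (metis integral_unique)
qed

lemma us_a: "us a = 0"
  unfolding us_def using t1 a2 W_a by simp

lemma energy: "energy_space_with_deriv a p \<phi> us gs"
  unfolding energy_space_with_deriv_def W1p_with_deriv_def
proof (intro conjI ballI allI impI)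
  show "set_integrable lborel {0..a} us" by (rule borel_integrable_atLeastAtMost'[OF us_cont])
  show "set_integrable lborel {e..a} gs" if "e \<in> {0<..a}" for e by (rule gs_int) (use that in auto)
  show "us y - us x = (LINT s:{x..y}|lborel. gs s)" if "0 < x \<and> x \<le> y \<and> y \<le> a" for x y
    using us_ftc that by auto
  show "set_integrable lborel {0..a} (\<lambda>t. \<bar>gs t\<bar> powr p * \<phi> t)"
    by (rule int_sum_set[OF k1_cont k2_cont]) (auto simp: gsp_eq)
  show "us a = 0" by (rule us_a)
qed

end


context hardy_sharp begin

definition "Q t = W t powr ((\<beta>-1)*p) * w t"
definition "Ar = integral {a/2..t1} Q"

lemma Q_cont: "continuous_on {a/2..t1} Q"
  unfolding Q_def using a2 t1 W_ne1
  by (intro continuous_intros continuous_on_powr w_cont_sub W_cont_sub) auto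

lemma Q_nonneg: "t \<in> {a/2..t1} \<Longrightarrow> 0 \<le> Q t"
proof -
  assume t: "t \<in> {a/2..t1}"
  then have "t \<in> {0<..a}" using a2 t1 by auto
  then have "0 < w t" using w_pos by auto
  then show ?thesis unfolding Q_def by simp
qed

lemma Q_int: "(\<integral>\<^sup>+t. ennreal (Q t) * indicator {a/2..t1} t \<partial>lborel) = ennreal Ar"
  unfolding Ar_def
  by (intro nn_integral_has_integral_lebesgue' Q_nonneg integrable_integral integrable_continuous_interval Q_cont)

lemma w_int2: "(\<integral>\<^sup>+t. ennreal (w t) * indicator {t1..a} t \<partial>lborel) = ennreal s0"
proof -
  have "w integrable_on {t1..a}" "W t1 = integral {t1..a} w" using W_int[of t1 t1] t1 a2 by auto
  then have "(w has_integral s0) {t1..a}" unfolding s0_def by (simp add: has_integral_integral)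
  then show ?thesis
    by (intro nn_integral_has_integral_lebesgue') (use w_pos t1 a2 in \<open>auto intro: less_imp_le\<close>)
qed

lemma lhs_bound:
  "(\<integral>\<^sup>+ t\<in>{0<..<a}. ennreal (\<bar>gs t\<bar> powr p * \<phi> t) \<partial>lborel)
     \<le> ennreal (\<beta> powr p * Ar + s0 powr ((\<beta>-1)*p) * s0)"
proof -
  have pt: "ennreal (\<bar>gs t\<bar> powr p * \<phi> t) * indicator {0<..<a} t
      \<le> ennreal (\<beta> powr p) * (ennreal (Q t) * indicator {a/2..t1} t)
         + ennreal (s0 powr ((\<beta>-1)*p)) * (ennreal (w t) * indicator {t1..a} t)" for t
  proof (cases "t \<in> {0<..<a}")
    case False then show ?thesis by simp
  next
    case True
    have e: "\<bar>gs t\<bar> powr p * \<phi> t = indicator {a/2..<t1} t * k1 t + indicator {t1..a} t * k2 t"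
      using gsp_eq True by auto
    consider "t < a/2" | "a/2 \<le> t" "t < t1" | "t1 \<le> t" by linarith
    then show ?thesis
    proof cases
      case 1 then show ?thesis unfolding e using True t1 by (simp add: indicator_def)
    next
      case 2
      have "k1 t = \<beta> powr p * Q t" unfolding k1_def Q_def ..
      moreover have "0 \<le> Q t" using Q_nonneg 2 by auto
      ultimately show ?thesis unfolding e using True 2 by (simp add: indicator_def ennreal_mult)
    next
      case 3
      have "0 \<le> w t" using w_pos True by (auto intro: less_imp_le)
      then show ?thesis unfolding e using True 3 t1 by (simp add: indicator_def k2_def ennreal_mult)
    qed
  qed
  have m1: "(\<lambda>t. ennreal (Q t) * indicator {a/2..t1} t) \<in> borel_measurable lborel"
    by (intro ind_meas Q_cont) auto
  have m2: "(\<lambda>t. ennreal (w t) * indicator {t1..a} t) \<in> borel_measurable lborel"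
    using t1 a2 by (intro ind_meas w_cont_sub) auto
  have "(\<integral>\<^sup>+ t\<in>{0<..<a}. ennreal (\<bar>gs t\<bar> powr p * \<phi> t) \<partial>lborel)
     \<le> (\<integral>\<^sup>+t. ennreal (\<beta> powr p) * (ennreal (Q t) * indicator {a/2..t1} t)
         + ennreal (s0 powr ((\<beta>-1)*p)) * (ennreal (w t) * indicator {t1..a} t) \<partial>lborel)"
    by (intro nn_integral_mono pt)
  also have "\<dots> = ennreal (\<beta> powr p) * ennreal Ar + ennreal (s0 powr ((\<beta>-1)*p)) * ennreal s0"
    using m1 m2 by (simp add: nn_integral_add nn_integral_cmult Q_int w_int2)
  also have "\<dots> = ennreal (\<beta> powr p * Ar + s0 powr ((\<beta>-1)*p) * s0)"
  proof -
    have "0 \<le> Ar" unfolding Ar_def using t1 by (intro integral_nonneg integrable_continuous_interval Q_cont Q_nonneg) auto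
    then show ?thesis using s0_pos by (simp add: ennreal_mult ennreal_plus)
  qed
  finally show ?thesis .
qed

lemma rhs_bound:
  "ennreal Ar \<le> (\<integral>\<^sup>+ t\<in>{0<..<a}. ennreal (\<bar>us t\<bar> powr p * eta a p \<phi> t powr p * \<phi> t) \<partial>lborel)"
proof -
  have pt: "ennreal (Q t) * indicator {a/2..t1} t \<le> ennreal (\<bar>us t\<bar> powr p * eta a p \<phi> t powr p * \<phi> t) * indicator {0<..<a} t" for t
  proof (cases "t \<in> {a/2..t1}")
    case False then show ?thesis by simp
  next
    case True
    have tt: "t \<in> {0<..<a}" using True a2 t1 by auto
    have Wt: "W t > 0" using W_pos tt by auto
    have us: "us t = W t powr \<beta>"
    proof (cases "t \<le> a/2")
      case True2: True
      then have ta: "t = a/2" using True by auto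
      show ?thesis unfolding ta us_def L_def by simp
    next
      case False
      then show ?thesis using True by (simp add: us_def)
    qed
    have "\<bar>us t\<bar> powr p * eta a p \<phi> t powr p * \<phi> t = (W t powr \<beta>) powr p * (w t * W t powr (-p))"
      using eta_phi[OF tt] us by (simp add: mult.assoc)
    also have "\<dots> = W t powr (\<beta>*p + -p) * w t"
      using Wt powr_add[of "W t" "\<beta>*p" "-p"] by (simp add: powr_powr)
    also have "\<beta>*p + -p = (\<beta>-1)*p" by (simp add: algebra_simps)
    finally have "\<bar>us t\<bar> powr p * eta a p \<phi> t powr p * \<phi> t = Q t" unfolding Q_def .
    then show ?thesis using tt True by simp
  qed
  have "ennreal Ar = (\<integral>\<^sup>+t. ennreal (Q t) * indicator {a/2..t1} t \<partial>lborel)" using Q_int by simp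
  also have "\<dots> \<le> (\<integral>\<^sup>+ t\<in>{0<..<a}. ennreal (\<bar>us t\<bar> powr p * eta a p \<phi> t powr p * \<phi> t) \<partial>lborel)"
    by (intro nn_integral_mono pt)
  finally show ?thesis .
qed

lemma A_lower: "L powr ((\<beta>-1)*p) * (L - s0) \<le> Ar"
proof -
  have wi: "w integrable_on {a/2..t1}" using a2 t1 by (intro integrable_continuous_interval w_cont_sub) auto
  have "integral {a/2..t1} w = L - s0" using W_split[of "a/2" t1] a2 t1 unfolding L_def s0_def by simp
  then have "L powr ((\<beta>-1)*p) * (L - s0) = integral {a/2..t1} (\<lambda>t. L powr ((\<beta>-1)*p) * w t)"
    by simp
  also have "\<dots> \<le> integral {a/2..t1} Q"
  proof (rule integral_le)
    show "(\<lambda>t. L powr ((\<beta>-1)*p) * w t) integrable_on {a/2..t1}" by (intro integrable_continuous_interval continuous_intros w_cont_sub) (use a2 t1 in auto)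
    show "Q integrable_on {a/2..t1}" by (intro integrable_continuous_interval Q_cont)
    show "L powr ((\<beta>-1)*p) * w x \<le> Q x" if "x \<in> {a/2..t1}" for x
    proof -
      have Wx: "W x > 0" using W_posI that a2 by auto
      have "W x \<le> L" using W_le_L that t1 by auto
      then have "L powr ((\<beta>-1)*p) \<le> W x powr ((\<beta>-1)*p)"
        using Wx beta p_gt by (intro powr_mono2') (auto simp: mult_nonpos_nonneg)
      moreover have "0 \<le> w x" using w_pos that a2 t1 by (auto intro: less_imp_le)
      ultimately show ?thesis unfolding Q_def by (intro mult_right_mono)
    qed
  qed
  finally show ?thesis unfolding Ar_def .
qed

lemma sharp_ineq:
  assumes C: "\<beta> powr p < C"
    and small: "s0 powr (\<beta>*p - p + 1) < (C - \<beta> powr p) * (L powr ((\<beta>-1)*p) * (L - s0))"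
  shows "(\<integral>\<^sup>+ t\<in>{0<..<a}. ennreal (\<bar>gs t\<bar> powr p * \<phi> t) \<partial>lborel)
     < ennreal C * (\<integral>\<^sup>+ t\<in>{0<..<a}. ennreal (\<bar>us t\<bar> powr p * eta a p \<phi> t powr p * \<phi> t) \<partial>lborel)"
proof -
  have e: "s0 powr ((\<beta>-1)*p) * s0 = s0 powr (\<beta>*p - p + 1)"
    using s0_pos powr_add[of s0 "(\<beta>-1)*p" 1] by (simp add: algebra_simps)
  have "(C - \<beta> powr p) * (L powr ((\<beta>-1)*p) * (L - s0)) \<le> (C - \<beta> powr p) * Ar"
    using C A_lower by (intro mult_left_mono) auto
  then have X: "\<beta> powr p * Ar + s0 powr ((\<beta>-1)*p) * s0 < C * Ar"
    using small e by (simp add: algebra_simps)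
  have X0: "0 \<le> \<beta> powr p * Ar + s0 powr ((\<beta>-1)*p) * s0"
  proof -
    have "0 \<le> Ar" unfolding Ar_def using t1 by (intro integral_nonneg integrable_continuous_interval Q_cont Q_nonneg) auto
    then show ?thesis using s0_pos by simp
  qed
  have "(\<integral>\<^sup>+ t\<in>{0<..<a}. ennreal (\<bar>gs t\<bar> powr p * \<phi> t) \<partial>lborel)
      \<le> ennreal (\<beta> powr p * Ar + s0 powr ((\<beta>-1)*p) * s0)" by (rule lhs_bound)
  also have "\<dots> < ennreal (C * Ar)" using X X0 by (intro ennreal_lessI) auto
  also have "\<dots> = ennreal C * ennreal Ar"
  proof -
    have "0 \<le> Ar" unfolding Ar_def using t1 by (intro integral_nonneg integrable_continuous_interval Q_cont Q_nonneg) auto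
    moreover have "0 \<le> C" using C by (smt (verit) powr_ge_zero)
    ultimately show ?thesis by (simp add: ennreal_mult)
  qed
  also have "\<dots> \<le> ennreal C * (\<integral>\<^sup>+ t\<in>{0<..<a}. ennreal (\<bar>us t\<bar> powr p * eta a p \<phi> t powr p * \<phi> t) \<partial>lborel)"
    by (intro mult_left_mono rhs_bound) auto
  finally show ?thesis .
qed

end


context hardy begin

lemma sharp_exists:
  assumes C: "C > ((p - 1) / p) powr p"
  shows "\<exists>u g. energy_space_with_deriv a p \<phi> u g \<and>
           (\<integral>\<^sup>+ t\<in>{0<..<a}. ennreal (\<bar>g t\<bar> powr p * \<phi> t) \<partial>lborel)
             < ennreal C * (\<integral>\<^sup>+ t\<in>{0<..<a}. ennreal (\<bar>u t\<bar> powr p * eta a p \<phi> t powr p * \<phi> t) \<partial>lborel)"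
proof -
  define r where "r = (p - 1) / p"
  have r: "0 < r" "r < 1" unfolding r_def using p_gt by (auto simp: field_simps)
  have Cpos: "C > 0" using C r unfolding r_def[symmetric] by (smt (verit) powr_gt_zero)
  define m where "m = C powr (1/p)"
  have mC: "m powr p = C" unfolding m_def using Cpos p_gt by (simp add: powr_powr)
  have rm: "r < m"
  proof -
    have "(r powr p) powr (1/p) < C powr (1/p)"
      using C r p_gt unfolding r_def[symmetric] by (intro powr_less_mono2) auto
    then show ?thesis unfolding m_def using r p_gt by (simp add: powr_powr)
  qed
  define \<beta> where "\<beta> = (r + min m 1) / 2"
  have b: "r < \<beta>" "\<beta> < 1" "\<beta> < m" unfolding \<beta>_def using r rm by auto
  have bpos: "\<beta> > 0" using b r by auto
  have bC: "\<beta> powr p < C"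
    using powr_less_mono2[of p \<beta> m] bpos b p_gt mC by auto
  define L where "L = W (a/2)"
  have Lpos: "L > 0" unfolding L_def using W_pos a_pos by auto
  define e where "e = \<beta> * p - p + 1"
  have epos: "e > 0" unfolding e_def using b(1) p_gt unfolding r_def by (simp add: field_simps)
  define D where "D = (C - \<beta> powr p) * (L powr ((\<beta>-1)*p) * (L/2))"
  have Dpos: "D > 0" unfolding D_def using bC Lpos by simp
  define \<epsilon> where "\<epsilon> = min (L/2) (D powr (1/e))"
  have epos': "\<epsilon> > 0" unfolding \<epsilon>_def using Lpos Dpos by simp
  have "continuous_on {a/2..a} W" using W_cont' a_pos by simp
  then have cc: "\<forall>x\<in>{a/2..a}. \<forall>e>0. \<exists>d>0. \<forall>x'\<in>{a/2..a}. dist x' x < d \<longrightarrow> dist (W x') (W x) < e"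
    unfolding continuous_on_iff .
  have ain: "a \<in> {a/2..a}" using a_pos by auto
  have "\<exists>d>0. \<forall>x'\<in>{a/2..a}. dist x' a < d \<longrightarrow> dist (W x') (W a) < \<epsilon>"
    using bspec[OF cc ain] epos' by blast
  then obtain d where d: "d > 0" "\<And>x. x \<in> {a/2..a} \<Longrightarrow> dist x a < d \<Longrightarrow> dist (W x) (W a) < \<epsilon>"
    by blast
  define t1 where "t1 = max (a - d/2) (3*a/4)"
  have t1: "a/2 < t1" "t1 < a" unfolding t1_def using a_pos d(1) by (auto simp: max_def)
  have "dist (W t1) (W a) < \<epsilon>" using d(2)[of t1] t1 d(1) unfolding t1_def by (auto simp: dist_real_def)
  then have Wt1: "W t1 < \<epsilon>" using W_a by (simp add: dist_real_def)
  interpret S: hardy_sharp a p \<phi> \<beta> t1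
    by unfold_locales (use b t1 r_def in auto)
  have s0: "S.s0 = W t1" by (simp add: S.s0_def)
  have L: "S.L = L" by (simp add: S.L_def L_def)
  have s0p: "S.s0 > 0" by (rule S.s0_pos)
  have small: "S.s0 powr (\<beta>*p - p + 1) < (C - \<beta> powr p) * (S.L powr ((\<beta>-1)*p) * (S.L - S.s0))"
  proof -
    have "S.s0 < D powr (1/e)" using Wt1 s0 unfolding \<epsilon>_def by simp
    then have "S.s0 powr e < (D powr (1/e)) powr e" using s0p epos by (intro powr_less_mono2) auto
    also have "\<dots> = D" using Dpos epos by (simp add: powr_powr)
    also have "D \<le> (C - \<beta> powr p) * (L powr ((\<beta>-1)*p) * (L - S.s0))"
    proof -
      have "S.s0 \<le> L/2" using Wt1 s0 unfolding \<epsilon>_def by simp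
      then have "L/2 \<le> L - S.s0" by simp
      then show ?thesis unfolding D_def using bC Lpos by (intro mult_left_mono) auto
    qed
    finally show ?thesis unfolding e_def L .
  qed
  show ?thesis using S.energy S.sharp_ineq[OF bC small] by blast
qed

end

theorem proposition2p3:
  fixes a p c1 c2 \<delta> :: real and \<phi> \<phi>' :: "real \<Rightarrow> real"
  assumes "a > 0" and "p > 1"
    and "continuous_on {0..a} \<phi>"
    and "\<And>t. t \<in> {0<..a} \<Longrightarrow> (\<phi> has_real_derivative \<phi>' t) (at t within {0<..a})"
    and "continuous_on {0<..a} \<phi>'"
    and "\<phi> 0 = 0"
    and "\<And>t. t \<in> {0<..a} \<Longrightarrow> \<phi> t > 0"
    and "c1 > 0" and "c2 > 0" and "\<delta> > 0"
    and "\<And>t. t \<in> {0<..a} \<Longrightarrow> c1 * t powr (p - 1 + \<delta>) \<le> \<phi> t"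
    and "\<And>t. t \<in> {0<..a} \<Longrightarrow> \<phi> t \<le> c2 * t powr (p - 1 + \<delta>)"
  shows "(\<forall>u g. energy_space_with_deriv a p \<phi> u g \<longrightarrow>
            (\<integral>\<^sup>+ t\<in>{0<..<a}. ennreal (\<bar>g t\<bar> powr p * \<phi> t) \<partial>lborel)
              \<ge> ennreal (((p - 1) / p) powr p) *
                (\<integral>\<^sup>+ t\<in>{0<..<a}. ennreal (\<bar>u t\<bar> powr p * eta a p \<phi> t powr p * \<phi> t) \<partial>lborel))
       \<and> (\<forall>C. C > ((p - 1) / p) powr p \<longrightarrow>
            (\<exists>u g. energy_space_with_deriv a p \<phi> u g \<and>
               (\<integral>\<^sup>+ t\<in>{0<..<a}. ennreal (\<bar>g t\<bar> powr p * \<phi> t) \<partial>lborel)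
                 < ennreal C *
                   (\<integral>\<^sup>+ t\<in>{0<..<a}. ennreal (\<bar>u t\<bar> powr p * eta a p \<phi> t powr p * \<phi> t) \<partial>lborel)))"
proof -
  interpret hardy a p \<phi>
    by unfold_locales (use assms in auto)
  show ?thesis
  proof (intro conjI allI impI)
    fix u g assume E: "energy_space_with_deriv a p \<phi> u g"
    interpret hardy_u a p \<phi> u g
      by unfold_locales (rule E)
    show "ennreal (((p - 1) / p) powr p) *
                (\<integral>\<^sup>+ t\<in>{0<..<a}. ennreal (\<bar>u t\<bar> powr p * eta a p \<phi> t powr p * \<phi> t) \<partial>lborel)
          \<le> (\<integral>\<^sup>+ t\<in>{0<..<a}. ennreal (\<bar>g t\<bar> powr p * \<phi> t) \<partial>lborel)"
      by (rule main_ineq)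
  next
    fix C :: real assume "C > ((p - 1) / p) powr p"
    then show "\<exists>u g. energy_space_with_deriv a p \<phi> u g \<and>
               (\<integral>\<^sup>+ t\<in>{0<..<a}. ennreal (\<bar>g t\<bar> powr p * \<phi> t) \<partial>lborel)
                 < ennreal C *
                   (\<integral>\<^sup>+ t\<in>{0<..<a}. ennreal (\<bar>u t\<bar> powr p * eta a p \<phi> t powr p * \<phi> t) \<partial>lborel)"
      by (rule sharp_exists)
  qed
qed

end
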